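(* Let the sequence $r$ on positive integers be defined by $r(1)=0$, $r(k)=\frac{3k}{2}+r(\frac{k}{2})$ if $k$ is even, and $r(k)=2+\frac{3(k-1)}{2}+r(\frac{k+1}{2})$ if $k\neq1$ is odd. Then $r$ is strictly increasing. *)

theory Defs
  imports Main
begin

(* The sequence r on positive integers; r 0 is an arbitrary junk value (0) outside the domain.
   All divisions are exact on the respective branches (k even, resp. k-1 even, k+1 even). *)
function r :: "nat \<Rightarrow> nat" where
  "r k = (if k \<le> 1 then 0
          else if even k then 3 * k div 2 + r (k div 2)
          else 2 + 3 * (k - 1) div 2 + r ((k + 1) div 2))"
  by auto
termination
  by (relation "measure id") (auto elim!: oddE)

end

theory Submission imports Defs begin
declare r.simps[simp del]
lemma e1: "k = 2*m \<Longrightarrow> m\<ge>1 \<Longrightarrow> r k = 3*m + r m" by (subst r.simps) simp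
lemma e2: "k = 2*m \<Longrightarrow> m\<ge>1 \<Longrightarrow> r (Suc k) = 2 + 3*m + r (Suc m)" by (subst r.simps) simp
lemma e3: "k = 2*m+1 \<Longrightarrow> m\<ge>1 \<Longrightarrow> r k = 2 + 3*m + r (Suc m)" by (subst r.simps) simp
lemma e4: "k = 2*m+1 \<Longrightarrow> m\<ge>1 \<Longrightarrow> r (Suc k) = 3*(Suc m) + r (Suc m)" by (subst r.simps) simp

lemma r_step: "k \<ge> 1 \<Longrightarrow> r k < r (Suc k)"
proof (induction k rule: less_induct)
  case (less k)
  show ?case
  proof (cases "k = 1")
    case True
    then show ?thesis by (subst r.simps, subst (2) r.simps, simp)
  next
    case False
    show ?thesis
    proof (cases "even k")
      case True
      then obtain m where m: "k = 2*m" by (elim evenE)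
      with False less.prems have m1: "m \<ge> 1" "m < k" by auto
      have "r m < r (Suc m)" using less.IH m1 by blast
      then show ?thesis using e1[OF m m1(1)] e2[OF m m1(1)] by linarith
    next
      case odd: False
      then obtain m where m: "k = 2*m+1" by (elim oddE)
      with False have m1: "m \<ge> 1" by auto
      show ?thesis using e3[OF m m1(1)] e4[OF m m1(1)] by simp
    qed
  qed
qed

lemma r_less: "1 \<le> a \<Longrightarrow> r a < r (a + Suc d)"
proof (induction d)
  case 0
  have "r a < r (Suc a)" using r_step 0 by blast
  then show ?case by simp
next
  case (Suc d)
  have "1 \<le> a + Suc d" by simp
  then have "r (a + Suc d) < r (Suc (a + Suc d))" by (rule r_step)
  moreover have "r a < r (a + Suc d)" using Suc by blast
  ultimately show ?case by simp
qed
theorem lemma5: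
  shows "strict_mono_on {1..} r"
proof (rule strict_mono_onI)
  fix a b :: nat assume a: "a \<in> {1..}" and "b \<in> {1..}" and ab: "a < b"
  obtain d where b: "b = a + Suc d" using less_imp_Suc_add[OF ab] by auto
  have "1 \<le> a" using a by simp
  then have "r a < r (a + Suc d)" by (rule r_less)
  then show "r a < r b" using b by simp
qed

end
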